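(* For every $n\ge 7$, the graph $G_n$ is not an IP-SEG* graph.
   Context: Let $L_1$ and $L_2$ be two distinct parallel horizontal lines in the plane. A closed straight line segment is an interval segment if both of its endpoints lie on the same line $L_i$, and a permutation segment if one endpoint lies on $L_1$ and the other on $L_2$. An IP-SEG model is a finite family of interval and permutation segments; its intersection graph has one vertex per segment, adjacent iff the segments intersect. An IP-SEG* model is an IP-SEG model in which all interval segments lie on the same line $L_i$; a graph is an IP-SEG* graph if it is isomorphic to the intersection graph of an IP-SEG* model. For $n\ge 3$, $G_n$ is the graph on $3n$ vertices $v_1,\dots,v_n,w_1,\dots,w_n,z_1,\dots,z_n$ whose edges are $v_iv_{i+1}$ (indices mod $n$), $v_iw_i$ and $w_iz_i$ for $1\le i\le n$, and no others (a chordless cycle with a pendant path of length $2$ attached at each cycle vertex). *)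

theory Defs
  imports "HOL-Analysis.Analysis"
begin

text \<open>The two distinct parallel
horizontal lines are L1 = {y = a} and L2 = {y = b} with a \<noteq> b.\<close>

type_synonym pt = "real \<times> real"
type_synonym seg = "pt \<times> pt"

definition seg_set :: "seg \<Rightarrow> pt set" where
  "seg_set s = closed_segment (fst s) (snd s)"

definition is_int_seg :: "real \<Rightarrow> seg \<Rightarrow> bool" where
  "is_int_seg c s \<longleftrightarrow> snd (fst s) = c \<and> snd (snd s) = c"

definition is_perm_seg :: "real \<Rightarrow> real \<Rightarrow> seg \<Rightarrow> bool" where
  "is_perm_seg a b s \<longleftrightarrow>
     (snd (fst s) = a \<and> snd (snd s) = b) \<or> (snd (fst s) = b \<and> snd (snd s) = a)"

text \<open>A graph (V, E) is an IP-SEG* graph w.r.t. the lines y = a and y = b iff there is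
an assignment of segments to vertices (a family indexed by the vertices; this captures
isomorphism) such that every segment is a permutation segment or an interval segment,
all interval segments lie on one common line y = c with c \<in> {a, b}, and distinct
vertices are adjacent iff their segments intersect.\<close>
definition ipseg_star_graph ::
  "real \<Rightarrow> real \<Rightarrow> 'v set \<Rightarrow> ('v \<Rightarrow> 'v \<Rightarrow> bool) \<Rightarrow> bool" where
  "ipseg_star_graph a b V E \<longleftrightarrow>
     (\<exists>c \<in> {a, b}. \<exists>f :: 'v \<Rightarrow> seg.
        (\<forall>v \<in> V. is_perm_seg a b (f v) \<or> is_int_seg c (f v)) \<and>
        (\<forall>u \<in> V. \<forall>v \<in> V. u \<noteq> v \<longrightarrow>
            (E u v \<longleftrightarrow> seg_set (f u) \<inter> seg_set (f v) \<noteq> {})))"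

text \<open>The graph G_n: vertex (0, i) is v_(i+1), (1, i) is w_(i+1), (2, i) is z_(i+1),
for i < n.\<close>
definition Gn_verts :: "nat \<Rightarrow> (nat \<times> nat) set" where
  "Gn_verts n = {0..<3} \<times> {0..<n}"

definition Gn_adj :: "nat \<Rightarrow> nat \<times> nat \<Rightarrow> nat \<times> nat \<Rightarrow> bool" where
  "Gn_adj n x y \<longleftrightarrow>
     (fst x = 0 \<and> fst y = 0 \<and>
        (snd y = (snd x + 1) mod n \<or> snd x = (snd y + 1) mod n)) \<or>
     (snd x = snd y \<and> ({fst x, fst y} = {0, 1} \<or> {fst x, fst y} = {1, 2}))"

end

theory Submission
  imports Defs
begin


lemma mem_seg: fixes x y a1 a2 b1 b2 :: real shows "(x, y) \<in> closed_segment (a1, a2) (b1, b2) \<longleftrightarrow>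
   (\<exists>u::real. 0 \<le> u \<and> u \<le> 1 \<and> x = (1-u)*a1 + u*b1 \<and> y = (1-u)*a2 + u*b2)"
  by (simp add: in_segment)

lemma seg_hor: fixes x y a1 b1 c :: real shows "(x, y) \<in> closed_segment (a1, c) (b1, c) \<longleftrightarrow> y = c \<and> min a1 b1 \<le> x \<and> x \<le> max a1 b1"
proof -
  have "(x, y) \<in> closed_segment (a1, c) (b1, c) \<longleftrightarrow> y = c \<and> x \<in> closed_segment a1 b1"
    by (auto simp: mem_seg in_segment algebra_simps)
  moreover have "x \<in> closed_segment a1 b1 \<longleftrightarrow> min a1 b1 \<le> x \<and> x \<le> max a1 b1"
    by (auto simp: closed_segment_eq_real_ivl min_def max_def)
  ultimately show ?thesis by simp
qed

lemma seg_perm_c: fixes x t s c d :: real assumes "c \<noteq> d"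
  shows "(x, c) \<in> closed_segment (t, c) (s, d) \<longleftrightarrow> x = t"
proof
  assume "(x, c) \<in> closed_segment (t, c) (s, d)"
  then obtain u where u: "0 \<le> u" "u \<le> 1" "x = (1-u)*t + u* s" "c = (1-u)*c + u*d" by (auto simp: mem_seg)
  then have "u * (d - c) = 0" by (auto simp: algebra_simps)
  moreover have "d - c \<noteq> 0" using assms by simp
  ultimately have "u = 0" by simp
  then show "x = t" using u by simp
next
  assume "x = t" then show "(x, c) \<in> closed_segment (t, c) (s, d)" by simp
qed

lemma GII: fixes a1 b1 a2 b2 c :: real shows "closed_segment (a1, c) (b1, c) \<inter> closed_segment (a2, c) (b2, c) \<noteq> {} \<longleftrightarrow>
   min a1 b1 \<le> max a2 b2 \<and> min a2 b2 \<le> max a1 b1"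
proof
  assume "closed_segment (a1, c) (b1, c) \<inter> closed_segment (a2, c) (b2, c) \<noteq> {}"
  then obtain x y where "(x,y) \<in> closed_segment (a1, c) (b1, c)" "(x,y) \<in> closed_segment (a2, c) (b2, c)" by auto
  then have "min a1 b1 \<le> x \<and> x \<le> max a1 b1" "min a2 b2 \<le> x \<and> x \<le> max a2 b2" by (auto simp: seg_hor)
  then show "min a1 b1 \<le> max a2 b2 \<and> min a2 b2 \<le> max a1 b1" by (auto simp: min_le_iff_disj le_max_iff_disj)
next
  assume h: "min a1 b1 \<le> max a2 b2 \<and> min a2 b2 \<le> max a1 b1"
  define x where "x = max (min a1 b1) (min a2 b2)"
  have "(x, c) \<in> closed_segment (a1, c) (b1, c)" "(x, c) \<in> closed_segment (a2, c) (b2, c)"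
    using h by (auto simp: seg_hor x_def)
  then show "closed_segment (a1, c) (b1, c) \<inter> closed_segment (a2, c) (b2, c) \<noteq> {}" by auto
qed

lemma GPI: fixes t s c d a1 b1 :: real assumes "c \<noteq> d"
  shows "closed_segment (t, c) (s, d) \<inter> closed_segment (a1, c) (b1, c) \<noteq> {} \<longleftrightarrow>
   min a1 b1 \<le> t \<and> t \<le> max a1 b1"
proof
  assume "closed_segment (t, c) (s, d) \<inter> closed_segment (a1, c) (b1, c) \<noteq> {}"
  then obtain x y where h: "(x,y) \<in> closed_segment (t, c) (s, d)" "(x,y) \<in> closed_segment (a1, c) (b1, c)" by auto
  then have "y = c" by (auto simp: seg_hor)
  then have "x = t" using h \<open>y = c\<close> seg_perm_c[OF assms, of x t s] by simp
  then show "min a1 b1 \<le> t \<and> t \<le> max a1 b1" using h \<open>y = c\<close> by (simp add: seg_hor)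
next
  assume "min a1 b1 \<le> t \<and> t \<le> max a1 b1"
  then have "(t, c) \<in> closed_segment (t, c) (s, d)" "(t, c) \<in> closed_segment (a1, c) (b1, c)"
    by (auto simp: seg_hor)
  then show "closed_segment (t, c) (s, d) \<inter> closed_segment (a1, c) (b1, c) \<noteq> {}" by auto
qed

lemma GPP: fixes t1 s1 t2 s2 c d :: real assumes "c \<noteq> d"
  shows "closed_segment (t1, c) (s1, d) \<inter> closed_segment (t2, c) (s2, d) \<noteq> {} \<longleftrightarrow>
   (t1 - t2) * (s1 - s2) \<le> 0"
proof
  assume "closed_segment (t1, c) (s1, d) \<inter> closed_segment (t2, c) (s2, d) \<noteq> {}"
  then obtain x y where h: "(x,y) \<in> closed_segment (t1, c) (s1, d)" "(x,y) \<in> closed_segment (t2, c) (s2, d)" by auto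
  then obtain u w where u: "0 \<le> u" "u \<le> 1" "x = (1-u)*t1 + u* s1" "y = (1-u)*c + u*d"
     and v: "0 \<le> w" "w \<le> 1" "x = (1-w)*t2 + w * s2" "y = (1-w)*c + w * d" by (auto simp: mem_seg)
  have "(u - w) * (d - c) = 0" using u v by (simp add: algebra_simps)
  then have "u = w" using assms by simp
  then have e: "(1-u)*(t1-t2) + u*(s1-s2) = 0" using u v by (simp add: algebra_simps)
  show "(t1 - t2) * (s1 - s2) \<le> 0"
  proof (rule ccontr)
    assume "\<not> ?thesis"
    then have "0 < (t1 - t2) * (s1 - s2)" by simp
    then have "(t1 - t2 > 0 \<and> s1 - s2 > 0) \<or> (t1 - t2 < 0 \<and> s1 - s2 < 0)"
      unfolding zero_less_mult_iff by simp
    then show False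
    proof
      assume a: "t1 - t2 > 0 \<and> s1 - s2 > 0"
      have "(1-u)*(t1-t2) \<ge> 0" "u*(s1-s2) \<ge> 0" using a u by auto
      moreover have "(1-u)*(t1-t2) > 0 \<or> u*(s1-s2) > 0" using a u
        by (cases "u = 1") auto
      ultimately show False using e by linarith
    next
      assume a: "t1 - t2 < 0 \<and> s1 - s2 < 0"
      have "(1-u)*(t1-t2) \<le> 0" "u*(s1-s2) \<le> 0" using a u by (auto simp: mult_nonneg_nonpos)
      moreover have "(1-u)*(t1-t2) < 0 \<or> u*(s1-s2) < 0" using a u
        by (cases "u = 1") (auto simp: mult_pos_neg)
      ultimately show False using e by linarith
    qed
  qed
next
  assume h: "(t1 - t2) * (s1 - s2) \<le> 0"
  define \<alpha> where "\<alpha> = t1 - t2"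
  define \<beta> where "\<beta> = s1 - s2"
  obtain u where u: "0 \<le> u" "u \<le> 1" "(1-u)*\<alpha> + u*\<beta> = 0"
  proof (cases "\<alpha> = \<beta>")
    case True
    then have "\<alpha> * \<alpha> \<le> 0" using h by (simp add: \<alpha>_def \<beta>_def)
    then have "\<alpha> = 0" by (metis mult_eq_0_iff not_square_less_zero le_less)
    then show ?thesis using that[of 0] True by simp
  next
    case False
    define u where "u = \<alpha> / (\<alpha> - \<beta>)"
    have d: "\<alpha> - \<beta> \<noteq> 0" using False by simp
    have ab: "\<alpha> * \<beta> \<le> 0" using h by (simp add: \<alpha>_def \<beta>_def)
    have "(1-u)*\<alpha> + u*\<beta> = 0" using d unfolding u_def by (simp add: field_simps)
    moreover have "0 \<le> u \<and> u \<le> 1"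
    proof (cases "\<alpha> - \<beta> > 0")
      case True
      then have "\<alpha> \<ge> 0 \<and> \<beta> \<le> 0" using ab by (auto simp: mult_le_0_iff)
      then show ?thesis using True unfolding u_def by (auto simp: divide_simps)
    next
      case False
      then have "\<alpha> - \<beta> < 0" using d by simp
      then have "\<alpha> \<le> 0 \<and> \<beta> \<ge> 0" using ab by (auto simp: mult_le_0_iff)
      then show ?thesis using \<open>\<alpha> - \<beta> < 0\<close> unfolding u_def by (auto simp: divide_simps)
    qed
    ultimately show ?thesis using that by blast
  qed
  define x where "x = (1-u)*t1 + u* s1"
  have "(x, (1-u)*c + u*d) \<in> closed_segment (t1, c) (s1, d)" using u by (auto simp: mem_seg x_def)
  moreover have "x = (1-u)*t2 + u* s2" using u(3) unfolding x_def \<alpha>_def \<beta>_def by (simp add: algebra_simps)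
  then have "(x, (1-u)*c + u*d) \<in> closed_segment (t2, c) (s2, d)" using u by (auto simp: mem_seg)
  ultimately show "closed_segment (t1, c) (s1, d) \<inter> closed_segment (t2, c) (s2, d) \<noteq> {}" by blast
qed



definition JJ :: "('v \<Rightarrow> bool) \<Rightarrow> ('v \<Rightarrow> real) \<Rightarrow> ('v \<Rightarrow> real) \<Rightarrow> ('v \<Rightarrow> real) \<Rightarrow> ('v \<Rightarrow> real) \<Rightarrow> 'v \<Rightarrow> 'v \<Rightarrow> bool" where
 "JJ P t s l r u v = (if P u then (if P v then (t u - t v) * (s u - s v) \<le> 0 else l v \<le> t u \<and> t u \<le> r v)
     else (if P v then l u \<le> t v \<and> t v \<le> r u else l u \<le> r v \<and> l v \<le> r u))"

definition LP where "LP P t r p x = (if P x then t x < t p else r x < t (p::'v))"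
definition LI where "LI P t l r b x = (if P x then t x < l b else r x < l (b::'v))"

lemma pos_prod: "(0::real) < a * b \<longleftrightarrow> (0 < a \<and> 0 < b) \<or> (a < 0 \<and> b < 0)"
  by (simp add: zero_less_mult_iff)
lemma nonpos_prod: "(a::real) * b \<le> 0 \<longleftrightarrow> (0 \<le> a \<and> b \<le> 0) \<or> (a \<le> 0 \<and> 0 \<le> b)"
  by (auto simp: mult_le_0_iff)

lemma sepP:
  assumes "P p" "JJ P t s l r x y" "\<not> JJ P t s l r x p" "\<not> JJ P t s l r y p"
    "l x \<le> r x" "l y \<le> r y"
  shows "LP P t r p x = LP P t r p y"
  using assms unfolding JJ_def LP_def not_le pos_prod nonpos_prod
  by (auto split: if_splits)

lemma sepI:
  assumes "\<not> P b" "\<not> (P x \<and> P y)" "JJ P t s l r x y" "\<not> JJ P t s l r x b" "\<not> JJ P t s l r y b"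
    "l x \<le> r x" "l y \<le> r y" "l b \<le> r b"
  shows "LI P t l r b x = LI P t l r b y"
  using assms unfolding JJ_def LI_def not_le
  by (auto split: if_splits)

lemma L0core:
  assumes "\<not> P A" "P B" "\<not> P C" "JJ P t s l r A B" "JJ P t s l r B C" "\<not> JJ P t s l r A C"
  shows False
  using assms unfolding JJ_def by auto

lemma F3core:
  assumes "P p" "P q" "P u" "\<not> JJ P t s l r p q" "\<not> JJ P t s l r q u" "\<not> JJ P t s l r p u"
   "LP P t r p q = LP P t r p u" "LP P t r q u = LP P t r q p" "LP P t r u p = LP P t r u q"
  shows False
  using assms unfolding JJ_def LP_def not_le pos_prod
  by auto

lemma C2core:
  assumes "P p" "P q" "\<not> P b" "\<not> JJ P t s l r p q" "\<not> JJ P t s l r p b" "\<not> JJ P t s l r q b"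
   "LP P t r p q = LP P t r p b" "LP P t r q b = LP P t r q p" "LI P t l r b p = LI P t l r b q"
   "l b \<le> r b"
  shows False
  using assms unfolding JJ_def LP_def LI_def not_le pos_prod
  by auto

lemma F2core:
  assumes "\<not> P A" "\<not> P B" "\<not> P C"
   "JJ P t s l r A B" "JJ P t s l r B C" "\<not> JJ P t s l r A C"
   "JJ P t s l r D A" "\<not> JJ P t s l r D B" "JJ P t s l r E C" "\<not> JJ P t s l r E B"
   "JJ P t s l r W B" "\<not> JJ P t s l r W A" "\<not> JJ P t s l r W C" "JJ P t s l r W Z" "\<not> JJ P t s l r Z B"
   "r A < l C" "P W \<Longrightarrow> LP P t r W C = LP P t r W A"
   "l A \<le> r A" "l B \<le> r B" "l C \<le> r C" "l D \<le> r D" "l E \<le> r E" "l W \<le> r W" "l Z \<le> r Z"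
  shows False
proof -
  have lAB: "l A < l B"
    using assms(1-8,16,18-21) unfolding JJ_def by (auto split: if_splits)
  have rBC: "r B < r C"
    using assms(1-6,9,10,16,18-20,22) unfolding JJ_def by (auto split: if_splits)
  show False
  proof (cases "P W")
    case True
    then show ?thesis using assms lAB rBC unfolding JJ_def LP_def by (auto split: if_splits)
  next
    case False
    then show ?thesis using assms lAB rBC unfolding JJ_def LP_def by (auto split: if_splits)
  qed
qed



lemma modsmall:
  fixes a b n :: nat
  assumes "0 < n" "a \<le> 2*n" "b \<le> 2*n" "a mod n = b mod n"
  shows "a = b \<or> a = b + n \<or> b = a + n \<or> a = b + 2*n \<or> b = a + 2*n"
proof -
  define qa where "qa = a div n"
  define qb where "qb = b div n"
  define m where "m = a mod n"
  define m' where "m' = b mod n"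
  have ea: "a = n*qa + m" and eb: "b = n*qb + m'" by (simp_all add: qa_def m_def qb_def m'_def)
  have e: "(2*n) div n = 2" using assms(1) by simp
  have "a div n \<le> (2*n) div n" "b div n \<le> (2*n) div n" using assms(2,3) by (simp_all only: div_le_mono)
  then have "qa \<le> 2" "qb \<le> 2" unfolding e qa_def qb_def .
  then have "qa = 0 \<or> qa = 1 \<or> qa = 2" "qb = 0 \<or> qb = 1 \<or> qb = 2" by auto
  then have "n*qa = 0 \<or> n*qa = n \<or> n*qa = 2*n" "n*qb = 0 \<or> n*qb = n \<or> n*qb = 2*n" by auto
  moreover have "m = m'" using assms(4) by (simp add: m_def m'_def)
  ultimately show ?thesis using ea eb by linarith
qed

lemma modcancel:
  fixes x i j n :: nat
  shows "(x + i) mod n = (x + j) mod n \<longleftrightarrow> i mod n = j mod n"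
proof
  assume h: "(x + i) mod n = (x + j) mod n"
  show "i mod n = j mod n"
  proof (cases "n = 0")
    case True then show ?thesis using h by simp
  next
    case False
    have "((x + i) + (n*x - x)) mod n = ((x + j) + (n*x - x)) mod n" using h by (metis mod_add_left_eq)
    moreover have "x \<le> n * x" using False by simp
    ultimately have "(i + n*x) mod n = (j + n*x) mod n"
      by (metis (no_types, lifting) add.commute add.left_commute le_add_diff_inverse)
    then show ?thesis by simp
  qed
next
  assume "i mod n = j mod n"
  then show "(x + i) mod n = (x + j) mod n" by (metis mod_add_right_eq)
qed

locale mdl =
  fixes n :: nat and P :: "nat \<times> nat \<Rightarrow> bool" and t s l r :: "nat \<times> nat \<Rightarrow> real"
  assumes n7: "7 \<le> n" and lr: "\<And>x. l x \<le> r x"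
    and ADJ: "\<And>u v. u \<in> Gn_verts n \<Longrightarrow> v \<in> Gn_verts n \<Longrightarrow> u \<noteq> v \<Longrightarrow> Gn_adj n u v = JJ P t s l r u v"
begin

definition cv where "cv i = (0::nat, i mod n)"
definition wv where "wv i = (1::nat, i mod n)"
definition zv where "zv i = (2::nat, i mod n)"

lemma npos: "0 < n" using n7 by simp

lemma verts: "cv i \<in> Gn_verts n" "wv i \<in> Gn_verts n" "zv i \<in> Gn_verts n"
  using npos by (auto simp: cv_def wv_def zv_def Gn_verts_def)

lemma Jrefl: "JJ P t s l r u u" using lr[of u] by (simp add: JJ_def)

lemma cv_n: "cv (i + n) = cv i" by (simp add: cv_def)

lemma cvJ: "JJ P t s l r (cv a) (cv b) \<longleftrightarrow> (a mod n = b mod n \<or> Suc a mod n = b mod n \<or> Suc b mod n = a mod n)"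
proof (cases "a mod n = b mod n")
  case True
  then have "cv a = cv b" by (simp add: cv_def)
  then show ?thesis using Jrefl True by simp
next
  case False
  then have "cv a \<noteq> cv b" by (simp add: cv_def)
  then have "JJ P t s l r (cv a) (cv b) = Gn_adj n (cv a) (cv b)" using ADJ verts by blast
  also have "\<dots> \<longleftrightarrow> (Suc a mod n = b mod n \<or> Suc b mod n = a mod n)"
    by (auto simp: Gn_adj_def cv_def mod_Suc_eq)
  finally show ?thesis using False by simp
qed

lemma noadj:
  assumes "a = x + i" "b = x + j" "i \<le> n" "j \<le> n" "i \<noteq> j" "i \<noteq> j + n" "j \<noteq> i + n"
    "i + 1 \<noteq> j" "i + 1 \<noteq> j + n" "j + 1 \<noteq> i" "j + 1 \<noteq> i + n"
  shows "\<not> JJ P t s l r (cv a) (cv b)"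
proof
  assume "JJ P t s l r (cv a) (cv b)"
  then have "(x+i) mod n = (x+j) mod n \<or> (x + Suc i) mod n = (x+j) mod n \<or> (x + Suc j) mod n = (x+i) mod n"
    unfolding cvJ assms(1,2) by simp
  then have "i mod n = j mod n \<or> Suc i mod n = j mod n \<or> Suc j mod n = i mod n"
    unfolding modcancel .
  then show False
  proof (elim disjE)
    assume "i mod n = j mod n"
    from modsmall[OF npos _ _ this] assms npos show False by linarith
  next
    assume "Suc i mod n = j mod n"
    from modsmall[OF npos _ _ this] assms npos show False by linarith
  next
    assume "Suc j mod n = i mod n"
    from modsmall[OF npos _ _ this] assms npos show False by linarith
  qed
qed

lemma cyc_adj: "JJ P t s l r (cv i) (cv (Suc i))"
  unfolding cvJ by simp

lemma wJ: "JJ P t s l r (wv i) (cv j) \<longleftrightarrow> i mod n = j mod n"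
proof -
  have "wv i \<noteq> cv j" by (simp add: wv_def cv_def)
  then have "JJ P t s l r (wv i) (cv j) = Gn_adj n (wv i) (cv j)" using ADJ verts by blast
  then show ?thesis by (simp add: Gn_adj_def wv_def cv_def insert_commute doubleton_eq_iff)
qed

lemma wzJ: "JJ P t s l r (wv i) (zv i)"
proof -
  have "wv i \<noteq> zv i" by (simp add: wv_def zv_def)
  then have "JJ P t s l r (wv i) (zv i) = Gn_adj n (wv i) (zv i)" using ADJ verts by blast
  then show ?thesis by (simp add: Gn_adj_def wv_def zv_def insert_commute doubleton_eq_iff)
qed

lemma zJ: "\<not> JJ P t s l r (zv i) (cv j)"
proof -
  have "zv i \<noteq> cv j" by (simp add: zv_def cv_def)
  then have "JJ P t s l r (zv i) (cv j) = Gn_adj n (zv i) (cv j)" using ADJ verts by blast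
  then show ?thesis by (simp add: Gn_adj_def zv_def cv_def insert_commute doubleton_eq_iff)
qed

lemma pathP:
  assumes "P p" "\<And>m. m \<le> L \<Longrightarrow> \<not> JJ P t s l r (cv (a+m)) p"
  shows "LP P t r p (cv a) = LP P t r p (cv (a+L))"
  using assms(2)
proof (induction L)
  case 0 then show ?case by simp
next
  case (Suc L)
  have "LP P t r p (cv (a+L)) = LP P t r p (cv (a + Suc L))"
    using sepP[OF assms(1) cyc_adj[of "a+L"]] Suc.prems[of L] Suc.prems[of "Suc L"] lr by simp
  then show ?case using Suc by simp
qed

lemma pathI:
  assumes "\<not> P b" "\<And>m. m \<le> L \<Longrightarrow> \<not> JJ P t s l r (cv (a+m)) b"
    "\<And>m. m < L \<Longrightarrow> \<not> (P (cv (a+m)) \<and> P (cv (a + Suc m)))"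
  shows "LI P t l r b (cv a) = LI P t l r b (cv (a+L))"
  using assms(2,3)
proof (induction L)
  case 0 then show ?case by simp
next
  case (Suc L)
  have "LI P t l r b (cv (a+L)) = LI P t l r b (cv (a + Suc L))"
    using sepI[OF assms(1) _ cyc_adj[of "a+L"]] Suc.prems(1)[of L] Suc.prems(1)[of "Suc L"] Suc.prems(2)[of L] lr
    by simp
  then show ?case using Suc by simp
qed

end


lemma J_sym: "JJ P t s l r u v = JJ P t s l r v u"
  unfolding JJ_def by (auto simp: algebra_simps)

context mdl begin

lemma modne:
  assumes "i \<le> n" "j \<le> n" "i \<noteq> j" "i \<noteq> j + n" "j \<noteq> i + n"
  shows "(x + i) mod n \<noteq> (x + j) mod n"
proof
  assume "(x + i) mod n = (x + j) mod n"
  then have "i mod n = j mod n" unfolding modcancel .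
  from modsmall[OF npos _ _ this] assms npos show False by linarith
qed

lemma wnot: "i mod n \<noteq> j mod n \<Longrightarrow> \<not> JJ P t s l r (cv j) (wv i)"
  using wJ J_sym by metis

lemma L0: "\<not> (\<not> P (cv x) \<and> P (cv (x+1)) \<and> \<not> P (cv (x+2)))"
proof
  assume h: "\<not> P (cv x) \<and> P (cv (x+1)) \<and> \<not> P (cv (x+2))"
  have 1: "JJ P t s l r (cv x) (cv (x+1))" using cyc_adj[of x] by simp
  have 2: "JJ P t s l r (cv (x+1)) (cv (x+2))" using cyc_adj[of "x+1"] by simp
  have 3: "\<not> JJ P t s l r (cv x) (cv (x+2))"
    by (rule noadj[where x=x and i=0 and j=2]) (use n7 in auto)
  show False using L0core[of P "cv x" "cv (x+1)" "cv (x+2)", OF _ _ _ 1 2 3] h by blast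
qed

lemma F3:
  assumes "P (cv x)" "P (cv (x+2))" "P (cv (x+4))"
  shows False
proof -
  have n1: "\<not> JJ P t s l r (cv x) (cv (x+2))"
    by (rule noadj[where x=x and i=0 and j=2]) (use n7 in auto)
  have n2: "\<not> JJ P t s l r (cv (x+2)) (cv (x+4))"
    by (rule noadj[where x=x and i=2 and j=4]) (use n7 in auto)
  have n3: "\<not> JJ P t s l r (cv x) (cv (x+4))"
    by (rule noadj[where x=x and i=0 and j=4]) (use n7 in auto)
  have s1: "LP P t r (cv x) (cv (x+2)) = LP P t r (cv x) (cv (x+2+2))"
  proof (rule pathP[OF assms(1)])
    fix m assume "m \<le> (2::nat)"
    then show "\<not> JJ P t s l r (cv (x + 2 + m)) (cv x)"
      by (intro noadj[where x=x and i="2+m" and j=0]) (use n7 in auto)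
  qed
  have s2: "LP P t r (cv (x+2)) (cv (x+4)) = LP P t r (cv (x+2)) (cv (x+4+(n-4)))"
  proof (rule pathP[OF assms(2)])
    fix m assume "m \<le> n - 4"
    then show "\<not> JJ P t s l r (cv (x + 4 + m)) (cv (x+2))"
      by (intro noadj[where x=x and i="4+m" and j=2]) (use n7 in auto)
  qed
  have s3: "LP P t r (cv (x+4)) (cv (x+0)) = LP P t r (cv (x+4)) (cv (x+0+2))"
  proof (rule pathP[OF assms(3)])
    fix m assume "m \<le> (2::nat)"
    then show "\<not> JJ P t s l r (cv (x + 0 + m)) (cv (x+4))"
      by (intro noadj[where x=x and i="m" and j=4]) (use n7 in auto)
  qed
  have e1: "x+2+2 = x+4" by simp
  have e2: "x+4+(n-4) = x+n" using n7 by simp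
  have e3: "x+0 = x" "x+0+2 = x+2" by simp_all
  have s1': "LP P t r (cv x) (cv (x+2)) = LP P t r (cv x) (cv (x+4))" using s1 unfolding e1 .
  have s2': "LP P t r (cv (x+2)) (cv (x+4)) = LP P t r (cv (x+2)) (cv x)" using s2 unfolding e2 cv_n .
  have s3': "LP P t r (cv (x+4)) (cv x) = LP P t r (cv (x+4)) (cv (x+2))" using s3 unfolding e3 .
  show False by (rule F3core[OF assms n1 n2 n3 s1' s2' s3'])
qed

lemma F2: "\<not> (\<not> P (cv x) \<and> \<not> P (cv (x+1)) \<and> \<not> P (cv (x+2)))"
proof
  assume h: "\<not> P (cv x) \<and> \<not> P (cv (x+1)) \<and> \<not> P (cv (x+2))"
  define A where "A = cv x"
  define B where "B = cv (x+1)"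
  define C where "C = cv (x+2)"
  define D where "D = cv (x+(n-1))"
  define E where "E = cv (x+3)"
  define W where "W = wv (x+1)"
  define Z where "Z = zv (x+1)"
  have JAB: "JJ P t s l r A B" using cyc_adj[of x] by (simp add: A_def B_def)
  have JBC: "JJ P t s l r B C" using cyc_adj[of "x+1"] by (simp add: B_def C_def)
  have nAC: "\<not> JJ P t s l r A C" unfolding A_def C_def
    by (rule noadj[where x=x and i=0 and j=2]) (use n7 in auto)
  have JDA: "JJ P t s l r D A"
  proof -
    have "Suc (x + (n-1)) = x + n" using n7 by simp
    then show ?thesis using cyc_adj[of "x+(n-1)"] cv_n[of x] by (simp add: D_def A_def)
  qed
  have nDB: "\<not> JJ P t s l r D B" unfolding D_def B_def
    by (rule noadj[where x=x and i="n-1" and j=1]) (use n7 in auto)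
  have JEC: "JJ P t s l r E C"
  proof -
    have "JJ P t s l r (cv (x+2)) (cv (Suc (x+2)))" by (rule cyc_adj)
    moreover have "Suc (x+2) = x+3" by simp
    ultimately show ?thesis using J_sym unfolding E_def C_def by metis
  qed
  have nEB: "\<not> JJ P t s l r E B" unfolding E_def B_def
    by (rule noadj[where x=x and i=3 and j=1]) (use n7 in auto)
  have JWB: "JJ P t s l r W B" unfolding W_def B_def wJ by simp
  have nWA: "\<not> JJ P t s l r W A" unfolding W_def A_def wJ
    using modne[of 1 0 x] n7 by simp
  have nWC: "\<not> JJ P t s l r W C" unfolding W_def C_def wJ
    using modne[of 1 2 x] n7 by simp
  have JWZ: "JJ P t s l r W Z" unfolding W_def Z_def by (rule wzJ)
  have nZB: "\<not> JJ P t s l r Z B" unfolding Z_def B_def by (rule zJ)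
  have path: "LP P t r W C = LP P t r W A" if "P W"
  proof -
    have "LP P t r W (cv (x+2)) = LP P t r W (cv (x+2+(n-2)))"
    proof (rule pathP[OF that])
      fix m assume m: "m \<le> n - 2"
      have "(x + 1) mod n \<noteq> (x + (2+m)) mod n" using modne[of 1 "2+m" x] m n7 by simp
      then show "\<not> JJ P t s l r (cv (x + 2 + m)) W" unfolding W_def
        using wnot by (simp add: add.assoc)
    qed
    moreover have ee: "x+2+(n-2) = x+n" using n7 by simp
    have "cv (x+2+(n-2)) = cv x" unfolding ee cv_n ..
    ultimately show ?thesis by (simp add: A_def C_def)
  qed
  have "r A < l C \<or> r C < l A" using nAC h unfolding JJ_def A_def C_def by auto
  then show False
  proof
    assume "r A < l C"
    then show False
      using F2core[of P A B C t s l r D E W Z, OF _ _ _ JAB JBC nAC JDA nDB JEC nEB JWB nWA nWC JWZ nZB]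
        h path lr by (simp add: A_def B_def C_def)
  next
    assume "r C < l A"
    show False
    proof (rule F2core[of P C B A t s l r E D W Z])
      show "JJ P t s l r C B" using JBC J_sym by metis
      show "JJ P t s l r B A" using JAB J_sym by metis
      show "\<not> JJ P t s l r C A" using nAC J_sym by metis
      show "P W \<Longrightarrow> LP P t r W A = LP P t r W C" using path by simp
    qed (use h JDA nDB JEC nEB JWB nWA nWC JWZ nZB \<open>r C < l A\<close> lr in \<open>simp_all add: A_def B_def C_def\<close>)
  qed
qed

lemma C2:
  assumes "P (cv x)" "1 \<le> k" "\<And>j. 1 \<le> j \<Longrightarrow> j \<le> k \<Longrightarrow> \<not> P (cv (x+j))" "P (cv (x+(k+1)))"
    "k+3 \<le> d" "d \<le> n-2" "\<not> P (cv (x+d))"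
  shows False
proof -
  have npq: "\<not> JJ P t s l r (cv x) (cv (x+(k+1)))"
    by (rule noadj[where x=x and i=0 and j="k+1"]) (use assms n7 in auto)
  have npb: "\<not> JJ P t s l r (cv x) (cv (x+d))"
    by (rule noadj[where x=x and i=0 and j="d"]) (use assms n7 in auto)
  have nqb: "\<not> JJ P t s l r (cv (x+(k+1))) (cv (x+d))"
    by (rule noadj[where x=x and i="k+1" and j="d"]) (use assms n7 in auto)
  have s1: "LP P t r (cv x) (cv (x+(k+1))) = LP P t r (cv x) (cv (x+(k+1)+(d-(k+1))))"
  proof (rule pathP[OF assms(1)])
    fix m assume "m \<le> d - (k+1)"
    then show "\<not> JJ P t s l r (cv (x + (k+1) + m)) (cv x)"
      by (intro noadj[where x=x and i="k+1+m" and j=0]) (use assms n7 in auto)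
  qed
  have s2: "LP P t r (cv (x+(k+1))) (cv (x+d)) = LP P t r (cv (x+(k+1))) (cv (x+d+(n-d)))"
  proof (rule pathP[OF assms(4)])
    fix m assume "m \<le> n - d"
    then show "\<not> JJ P t s l r (cv (x + d + m)) (cv (x+(k+1)))"
      by (intro noadj[where x=x and i="d+m" and j="k+1"]) (use assms n7 in auto)
  qed
  have s3: "LI P t l r (cv (x+d)) (cv x) = LI P t l r (cv (x+d)) (cv (x+(k+1)))"
  proof (rule pathI[OF assms(7)])
    fix m assume "m \<le> k+1"
    then show "\<not> JJ P t s l r (cv (x + m)) (cv (x+d))"
      by (intro noadj[where x=x and i="m" and j="d"]) (use assms n7 in auto)
  next
    fix m assume m: "m < k+1"
    show "\<not> (P (cv (x + m)) \<and> P (cv (x + Suc m)))"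
    proof (cases "m = 0")
      case True then show ?thesis using assms(3)[of 1] assms(2) by simp
    next
      case False then show ?thesis using assms(3)[of m] m by simp
    qed
  qed
  have e1: "x+(k+1)+(d-(k+1)) = x + d" using assms by simp
  have e2: "cv (x+d+(n-d)) = cv x" using assms n7 cv_n[of x] by (simp add: add.assoc)
  show False
    using C2core[of P "cv x" "cv (x+(k+1))" "cv (x+d)", OF assms(1,4,7) npq npb nqb _ _ _ lr]
      s1 s2 s3 e1 e2 by simp
qed


lemma cv_mult: "cv (y + n * q) = cv y" by (simp add: cv_def)

lemma contra: False
proof -
  consider (allP) "\<forall>i. P (cv i)" | (allI) "\<forall>i. \<not> P (cv i)" | (mix) x0 y where "P (cv x0)" "\<not> P (cv y)"
    by blast
  then show False
  proof cases
    case allP then show False using F3[of 0] by simp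
  next
    case allI then show False using F2[of 0] by simp
  next
    case mix
    define q where "q = x0 div n"
    define m where "m = x0 mod n"
    have h1: "x0 = n*q + m" by (simp add: q_def m_def)
    have h2: "m < n" using npos by (simp add: m_def)
    have "x0 + (n - m + y) = y + n*(q + 1)"
      unfolding distrib_left mult_1_right using h1 h2 by linarith
    then have "cv (x0 + (n - m + y)) = cv y" using cv_mult[of y "q+1"] by metis
    then have ex: "\<exists>d. \<not> P (cv (x0 + d))" using mix by metis
    define d0 where "d0 = (LEAST d. \<not> P (cv (x0 + d)))"
    have d0a: "\<not> P (cv (x0 + d0))" unfolding d0_def using LeastI_ex[OF ex] .
    have d0b: "\<And>d. d < d0 \<Longrightarrow> P (cv (x0 + d))" unfolding d0_def using not_less_Least by blast
    have d0pos: "0 < d0" using d0a mix by (cases d0) auto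
    have "cv (x0 + n * (d0 + 1)) = cv x0" by (rule cv_mult)
    moreover have "d0 < n * (d0 + 1)"
    proof -
      have "d0 \<le> n * d0" using npos by simp
      then show ?thesis unfolding distrib_left mult_1_right using npos by linarith
    qed
    ultimately have ex2: "\<exists>e. d0 < e \<and> P (cv (x0 + e))" using mix by metis
    define e0 where "e0 = (LEAST e. d0 < e \<and> P (cv (x0 + e)))"
    have e0a: "d0 < e0 \<and> P (cv (x0 + e0))" unfolding e0_def using LeastI_ex[OF ex2] .
    have e0b: "\<And>e. e < e0 \<Longrightarrow> \<not> (d0 < e \<and> P (cv (x0 + e)))" unfolding e0_def using not_less_Least by blast
    define x where "x = x0 + (d0 - 1)"
    define k where "k = e0 - d0"
    have k1: "1 \<le> k" using e0a unfolding k_def by linarith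
    have Px: "P (cv x)" using d0b[of "d0 - 1"] d0pos by (simp add: x_def)
    have Irun: "\<not> P (cv (x + j))" if "1 \<le> j" "j \<le> k" for j
    proof (cases "j = 1")
      case True then show ?thesis using d0a d0pos by (simp add: x_def)
    next
      case False
      have "x + j = x0 + (d0 - 1 + j)" by (simp add: x_def)
      moreover have "d0 < d0 - 1 + j" "d0 - 1 + j < e0" using that False d0pos e0a by (auto simp: k_def)
      ultimately show ?thesis using e0b[of "d0 - 1 + j"] by (simp add: add.assoc)
    qed
    have Pq: "P (cv (x + (k+1)))"
    proof -
      have "x + (k+1) = x0 + e0" using d0pos e0a by (simp add: x_def k_def)
      then show ?thesis using e0a by simp
    qed
    have k2: "k \<le> 2"
    proof (rule ccontr)
      assume "\<not> k \<le> 2"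
      then have "\<not> P (cv (x+1))" "\<not> P (cv (x+2))" "\<not> P (cv (x+3))" using Irun[of 1] Irun[of 2] Irun[of 3] by auto
      moreover have "x+1+1 = x+2" "x+1+2 = x+3" by simp_all
      ultimately show False using F2[of "x+1"] by metis
    qed
    have allP: "P (cv (x + d))" if a: "k+1 \<le> d" "d \<le> n" for d
    proof -
      have "d = k+1 \<or> d = k+2 \<or> (k+3 \<le> d \<and> d \<le> n-2) \<or> d = n-1 \<or> d = n" using a by linarith
      then consider "d = k+1" | "d = k+2" | "k+3 \<le> d \<and> d \<le> n-2" | "d = n-1" | "d = n" by blast
      then show ?thesis
      proof cases
        case 1 then show ?thesis using Pq by simp
      next
        case 2
        have "\<not> P (cv (x+k))" using Irun[of k] k1 by simp
        then show ?thesis using L0[of "x+k"] Pq 2 by (simp add: add.assoc)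
      next
        case 3
        show ?thesis
        proof (rule ccontr)
          assume "\<not> P (cv (x + d))"
          then show False using C2[of x k d] Px k1 Irun Pq 3 by blast
        qed
      next
        case 4
        have a: "x + (n-1) + 1 = x + n" "x + (n-1) + 2 = (x+1) + n" using n7 by simp_all
        have "\<not> P (cv (x+1))" using Irun[of 1] k1 by simp
        then show ?thesis using L0[of "x+(n-1)"] Px 4 unfolding a cv_n by simp
      next
        case 5 then show ?thesis using Px cv_n[of x] by simp
      qed
    qed
    have "P (cv (x + (k+1)))" "P (cv (x + (k+3)))" "P (cv (x + (k+5)))"
      using allP[of "k+1"] allP[of "k+3"] allP[of "k+5"] k2 n7 by simp_all
    moreover have "x + (k+1) + 2 = x + (k+3)" "x + (k+1) + 4 = x + (k+5)" by simp_all
    ultimately show False using F3[of "x + (k+1)"] by metis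
  qed
qed

end

theorem mainTheorem8:
  fixes n :: nat and a b :: real
  assumes "n \<ge> 7" and "a \<noteq> b"
  shows "\<not> ipseg_star_graph a b (Gn_verts n) (Gn_adj n)"
proof
  assume "ipseg_star_graph a b (Gn_verts n) (Gn_adj n)"
  then obtain c f where c: "c \<in> {a, b}"
    and H1: "\<forall>v \<in> Gn_verts n. is_perm_seg a b (f v) \<or> is_int_seg c (f v)"
    and H2: "\<forall>u \<in> Gn_verts n. \<forall>v \<in> Gn_verts n. u \<noteq> v \<longrightarrow>
            (Gn_adj n u v \<longleftrightarrow> seg_set (f u) \<inter> seg_set (f v) \<noteq> {})"
    unfolding ipseg_star_graph_def apply - apply (elim bexE exE conjE) apply (rule that) apply assumption+ done
  define d where "d = (if c = a then b else a)"
  have cd: "c \<noteq> d" using c assms(2) by (auto simp: d_def)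
  define P where "P v = is_perm_seg a b (f v)" for v
  define t where "t v = (if snd (fst (f v)) = c then fst (fst (f v)) else fst (snd (f v)))" for v
  define s where "s v = (if snd (fst (f v)) = c then fst (snd (f v)) else fst (fst (f v)))" for v
  define l where "l v = min (fst (fst (f v))) (fst (snd (f v)))" for v
  define r where "r v = max (fst (fst (f v))) (fst (snd (f v)))" for v
  have permseg: "seg_set (f v) = closed_segment (t v, c) (s v, d)" if "P v" for v
  proof -
    define x1 where "x1 = fst (fst (f v))"
    define y1 where "y1 = snd (fst (f v))"
    define x2 where "x2 = fst (snd (f v))"
    define y2 where "y2 = snd (snd (f v))"
    have fv: "f v = ((x1, y1), (x2, y2))" by (simp add: x1_def y1_def x2_def y2_def)
    have "(y1 = a \<and> y2 = b) \<or> (y1 = b \<and> y2 = a)" using that fv by (simp add: P_def is_perm_seg_def)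
    then have "(y1 = c \<and> y2 = d) \<or> (y1 = d \<and> y2 = c)" using c by (auto simp: d_def)
    then show ?thesis
      using cd by (auto simp: seg_set_def t_def s_def fv closed_segment_commute)
  qed
  have intseg: "seg_set (f v) = closed_segment (fst (fst (f v)), c) (fst (snd (f v)), c)"
    if "v \<in> Gn_verts n" "\<not> P v" for v
  proof -
    define x1 where "x1 = fst (fst (f v))"
    define y1 where "y1 = snd (fst (f v))"
    define x2 where "x2 = fst (snd (f v))"
    define y2 where "y2 = snd (snd (f v))"
    have fv: "f v = ((x1, y1), (x2, y2))" by (simp add: x1_def y1_def x2_def y2_def)
    have "is_int_seg c (f v)" using H1 that by (auto simp: P_def)
    then show ?thesis by (simp add: fv is_int_seg_def seg_set_def)
  qed
  have ADJ: "Gn_adj n u v = JJ P t s l r u v" if "u \<in> Gn_verts n" "v \<in> Gn_verts n" "u \<noteq> v" for u v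
  proof -
    have "Gn_adj n u v \<longleftrightarrow> seg_set (f u) \<inter> seg_set (f v) \<noteq> {}" using H2 that by blast
    also have "\<dots> \<longleftrightarrow> JJ P t s l r u v"
    proof (cases "P u"; cases "P v")
      assume "P u" "P v"
      then show ?thesis using GPP[OF cd] by (simp add: permseg JJ_def)
    next
      assume "P u" "\<not> P v"
      then show ?thesis using GPI[OF cd] that by (simp add: permseg intseg JJ_def l_def r_def)
    next
      assume "\<not> P u" "P v"
      then show ?thesis using GPI[OF cd] that by (simp add: permseg intseg JJ_def l_def r_def Int_commute)
    next
      assume "\<not> P u" "\<not> P v"
      then show ?thesis using GII that by (simp add: intseg JJ_def l_def r_def)
    qed
    finally show ?thesis .
  qed
  interpret mdl n P t s l r
  proof
    show "7 \<le> n" using assms(1) .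
    show "\<And>x. l x \<le> r x" by (simp add: l_def r_def)
    show "\<And>u v. u \<in> Gn_verts n \<Longrightarrow> v \<in> Gn_verts n \<Longrightarrow> u \<noteq> v \<Longrightarrow> Gn_adj n u v = JJ P t s l r u v"
      by (rule ADJ)
  qed
  show False by (rule contra)
qed

end
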